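(* Let $n,k\ge 0$ be integers with expansions $(n)_{\mathbf F}=(n_0,n_1,n_2,\ldots)$ and $(k)_{\mathbf F}=(k_0,k_1,k_2,\ldots)$ in the base $\mathbf F$. Then $$\binom{n}{k}_F\equiv \binom{n_0}{k_0}_F\binom{n_1}{k_1}_F\binom{n_2}{k_2}_F\cdots \pmod 2$$ (the product is effectively finite since all but finitely many factors are $\binom{0}{0}_F=1$).
   Context: The Fibonacci numbers are defined by $F_0=0$, $F_1=1$, $F_n=F_{n-1}+F_{n-2}$ for $n\ge 2$. For $n\ge 0$ let $n!_F=F_1F_2\cdots F_n$ (with $0!_F=1$), and for $0\le k\le n$ define the Fibonomial coefficient $\binom{n}{k}_F=\dfrac{n!_F}{k!_F\,(n-k)!_F}$; by convention $\binom{n}{k}_F=0$ if $k<0$ or $k>n$. The base $\mathbf F$ is the sequence $(b_0,b_1,b_2,\ldots)=(1,3,3\cdot 2,3\cdot 2^2,\ldots)$, i.e. $b_0=1$ and $b_i=3\cdot 2^{i-1}$ for $i\ge 1$. Every integer $n\ge 0$ has a unique expansion $n=\sum_{i\ge 0} n_i b_i$ with $0\le n_i<b_{i+1}/b_i$ for all $i$ (so $0\le n_0\le 2$ and $n_i\in\{0,1\}$ for $i\ge 1$, with only finitely many nonzero digits); this digit sequence is denoted $(n)_{\mathbf F}=(n_0,n_1,n_2,\ldots)$. *)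

theory Defs
  imports "HOL-Number_Theory.Fib"
begin

definition fibfact :: "nat \<Rightarrow> nat" where
  "fibfact n = (\<Prod>i=1..n. fib i)"

text \<open>Fibonomial coefficient; the quotient is an integer, so nat division is exact.
  Zero outside 0 <= k <= n.\<close>
definition fibonomial :: "nat \<Rightarrow> nat \<Rightarrow> nat" where
  "fibonomial n k = (if k \<le> n then fibfact n div (fibfact k * fibfact (n - k)) else 0)"

definition baseF :: "nat \<Rightarrow> nat" where
  "baseF i = (if i = 0 then 1 else 3 * 2 ^ (i - 1))"

definition is_F_expansion :: "nat \<Rightarrow> (nat \<Rightarrow> nat) \<Rightarrow> bool" where
  "is_F_expansion n d \<longleftrightarrow>
     finite {i. d i \<noteq> 0} \<and>
     (\<forall>i. d i * baseF i < baseF (Suc i)) \<and>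
     n = (\<Sum>i\<in>{i. d i \<noteq> 0}. d i * baseF i)"

definition F_digits :: "nat \<Rightarrow> nat \<Rightarrow> nat" where
  "F_digits n = (THE d. is_F_expansion n d)"

end

theory Submission
  imports Defs
begin

fun H :: "nat \<Rightarrow> nat \<Rightarrow> nat" where
  "H 0 b = 1"
| "H (Suc a) 0 = 1"
| "H (Suc a) (Suc b) = fib (a+2) * H (Suc a) b + fib b * H a (Suc b)"

lemma fibfact_Suc: "fibfact (Suc n) = fib (Suc n) * fibfact n"
  by (simp add: fibfact_def prod.nat_ivl_Suc')

lemma fibfact_pos: "fibfact n > 0"
  unfolding fibfact_def by (auto intro!: prod_pos fib_neq_0_nat)

lemma H_fact: "H a b * fibfact a * fibfact b = fibfact (a+b)"
proof (induction a b rule: H.induct)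
  case (1 b) then show ?case by (simp add: fibfact_def)
next
  case (2 a) then show ?case by (simp add: fibfact_def)
next
  case (3 a b)
  have e1: "fib (a+2) * H (Suc a) b * fibfact (Suc a) * fibfact (Suc b)
        = fib (a+2) * fib (Suc b) * fibfact (Suc a + b)"
    proof -
      have "fib (a+2) * H (Suc a) b * fibfact (Suc a) * fibfact (Suc b)
          = fib (a+2) * fib (Suc b) * (H (Suc a) b * fibfact (Suc a) * fibfact b)"
        by (simp only: fibfact_Suc[of b] mult_ac)
      then show ?thesis using "3.IH"(1) by simp
    qed
  have e2: "fib b * H a (Suc b) * fibfact (Suc a) * fibfact (Suc b)
        = fib b * fib (Suc a) * fibfact (a + Suc b)"
    proof -
      have "fib b * H a (Suc b) * fibfact (Suc a) * fibfact (Suc b)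
          = fib b * fib (Suc a) * (H a (Suc b) * fibfact a * fibfact (Suc b))"
        by (simp only: fibfact_Suc[of a] mult_ac)
      then show ?thesis using "3.IH"(2) by simp
    qed
  have f: "fib (Suc (Suc a + b)) = fib (a+2) * fib (Suc b) + fib b * fib (Suc a)"
    using fib_add[of "Suc a" b] by (simp add: algebra_simps)
  have "H (Suc a) (Suc b) * fibfact (Suc a) * fibfact (Suc b)
     = fib (a+2) * H (Suc a) b * fibfact (Suc a) * fibfact (Suc b)
       + fib b * H a (Suc b) * fibfact (Suc a) * fibfact (Suc b)"
    by (simp add: algebra_simps)
  also have "\<dots> = fib (a+2) * fib (Suc b) * fibfact (Suc a + b) + fib b * fib (Suc a) * fibfact (a + Suc b)"
    by (simp only: e1 e2)
  also have "\<dots> = (fib (a+2) * fib (Suc b) + fib b * fib (Suc a)) * fibfact (Suc a + b)"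
    by (simp only: add_Suc_right add_Suc distrib_right)
  also have "\<dots> = fibfact (Suc a + Suc b)"
    using f fibfact_Suc[of "Suc a + b"] by (simp del: fib.simps)
  finally show ?case .
qed

lemma fibonomial_H: "k \<le> n \<Longrightarrow> fibonomial n k = H k (n - k)"
proof -
  assume "k \<le> n"
  have "fibfact n = H k (n-k) * (fibfact k * fibfact (n-k))"
    using H_fact[of k "n-k"] \<open>k \<le> n\<close> by (simp add: algebra_simps)
  then show ?thesis using \<open>k \<le> n\<close> fibfact_pos unfolding fibonomial_def by simp
qed

lemma fib_even: "even (fib n) \<longleftrightarrow> 3 dvd n"
proof (induction n rule: fib.induct)
  case 1 then show ?case by simp
next
  case 2 then show ?case by simp
next
  case (3 n)
  have "fib (Suc (Suc n)) = fib (Suc n) + fib n" by simp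
  then show ?case using 3 by (simp only: even_add) presburger
qed

lemma fib_mod2: "fib n mod 2 = (if 3 dvd n then 0 else 1)"
  using fib_even[of n] by (auto simp: even_iff_mod_2_eq_zero odd_iff_mod_2_eq_one)

definition T :: "nat \<Rightarrow> nat \<Rightarrow> nat" where
  "T n k = (if k mod 3 \<le> n mod 3 then (n div 3) choose (k div 3) else 0)"

lemma T_rec: "T (a+b+2) (a+1) mod 2 =
   ((if 3 dvd (a+2) then 0 else 1) * T (a+b+1) (a+1) + (if 3 dvd b then 0 else 1) * T (a+b+1) a) mod 2"
proof -
  define p where "p = a div 3"
  define r where "r = a mod 3"
  define q where "q = b div 3"
  define s where "s = b mod 3"
  have a: "a = 3*p + r" "r < 3" unfolding p_def r_def by simp_all
  have b: "b = 3*q + s" "s < 3" unfolding q_def s_def by simp_all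
  have r: "r = 0 \<or> r = 1 \<or> r = 2" and s: "s = 0 \<or> s = 1 \<or> s = 2" using a b by auto
  have pas: "(p+q+2 choose (p+1)) = (p+q+1 choose p) + (p+q+1 choose (p+1))"
    using binomial_Suc_Suc[of "p+q+1" p] by simp
  have xx: "\<And>x::nat. (x + x) mod 2 = 0" by presburger
  from r s show ?thesis
  proof (elim disjE)
    assume rs: "r = 0" "s = 0"
    have ab: "a = 3*p+0" "b = 3*q+0" using a b rs by auto
    have t1: "T (a+b+2) (a+1) = ((p+q) choose (p))"
    proof -
      have h: "(a+b+2) div 3 = p+q" "(a+b+2) mod 3 = 2" "(a+1) div 3 = p" "(a+1) mod 3 = 1"
        using ab by presburger+
      show ?thesis unfolding T_def h by simp
    qed
    have t2: "T (a+b+1) (a+1) = ((p+q) choose (p))"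
    proof -
      have h: "(a+b+1) div 3 = p+q" "(a+b+1) mod 3 = 1" "(a+1) div 3 = p" "(a+1) mod 3 = 1"
        using ab by presburger+
      show ?thesis unfolding T_def h by simp
    qed
    have t3: "T (a+b+1) (a) = ((p+q) choose (p))"
    proof -
      have h: "(a+b+1) div 3 = p+q" "(a+b+1) mod 3 = 1" "(a) div 3 = p" "(a) mod 3 = 0"
        using ab by presburger+
      show ?thesis unfolding T_def h by simp
    qed
    have e1: "(if 3 dvd (a+2) then 0 else 1) = (1::nat)" using ab by presburger
    have e2: "(if 3 dvd b then 0 else 1) = (0::nat)" using ab by presburger
    show ?thesis unfolding t1 t2 t3 e1 e2 using pas by (simp del: binomial_Suc_Suc add: xx add.commute)
  next
    assume rs: "r = 0" "s = 1"
    have ab: "a = 3*p+0" "b = 3*q+1" using a b rs by auto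
    have t1: "T (a+b+2) (a+1) = 0"
    proof -
      have h: "(a+b+2) div 3 = p+q+1" "(a+b+2) mod 3 = 0" "(a+1) div 3 = p" "(a+1) mod 3 = 1"
        using ab by presburger+
      show ?thesis unfolding T_def h by simp
    qed
    have t2: "T (a+b+1) (a+1) = ((p+q) choose (p))"
    proof -
      have h: "(a+b+1) div 3 = p+q" "(a+b+1) mod 3 = 2" "(a+1) div 3 = p" "(a+1) mod 3 = 1"
        using ab by presburger+
      show ?thesis unfolding T_def h by simp
    qed
    have t3: "T (a+b+1) (a) = ((p+q) choose (p))"
    proof -
      have h: "(a+b+1) div 3 = p+q" "(a+b+1) mod 3 = 2" "(a) div 3 = p" "(a) mod 3 = 0"
        using ab by presburger+
      show ?thesis unfolding T_def h by simp
    qed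
    have e1: "(if 3 dvd (a+2) then 0 else 1) = (1::nat)" using ab by presburger
    have e2: "(if 3 dvd b then 0 else 1) = (1::nat)" using ab by presburger
    show ?thesis unfolding t1 t2 t3 e1 e2 using pas by (simp del: binomial_Suc_Suc add: xx add.commute)
  next
    assume rs: "r = 0" "s = 2"
    have ab: "a = 3*p+0" "b = 3*q+2" using a b rs by auto
    have t1: "T (a+b+2) (a+1) = ((p+q+1) choose (p))"
    proof -
      have h: "(a+b+2) div 3 = p+q+1" "(a+b+2) mod 3 = 1" "(a+1) div 3 = p" "(a+1) mod 3 = 1"
        using ab by presburger+
      show ?thesis unfolding T_def h by simp
    qed
    have t2: "T (a+b+1) (a+1) = 0"
    proof -
      have h: "(a+b+1) div 3 = p+q+1" "(a+b+1) mod 3 = 0" "(a+1) div 3 = p" "(a+1) mod 3 = 1"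
        using ab by presburger+
      show ?thesis unfolding T_def h by simp
    qed
    have t3: "T (a+b+1) (a) = ((p+q+1) choose (p))"
    proof -
      have h: "(a+b+1) div 3 = p+q+1" "(a+b+1) mod 3 = 0" "(a) div 3 = p" "(a) mod 3 = 0"
        using ab by presburger+
      show ?thesis unfolding T_def h by simp
    qed
    have e1: "(if 3 dvd (a+2) then 0 else 1) = (1::nat)" using ab by presburger
    have e2: "(if 3 dvd b then 0 else 1) = (1::nat)" using ab by presburger
    show ?thesis unfolding t1 t2 t3 e1 e2 using pas by (simp del: binomial_Suc_Suc add: xx add.commute)
  next
    assume rs: "r = 1" "s = 0"
    have ab: "a = 3*p+1" "b = 3*q+0" using a b rs by auto
    have t1: "T (a+b+2) (a+1) = 0"
    proof -
      have h: "(a+b+2) div 3 = p+q+1" "(a+b+2) mod 3 = 0" "(a+1) div 3 = p" "(a+1) mod 3 = 2"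
        using ab by presburger+
      show ?thesis unfolding T_def h by simp
    qed
    have t2: "T (a+b+1) (a+1) = ((p+q) choose (p))"
    proof -
      have h: "(a+b+1) div 3 = p+q" "(a+b+1) mod 3 = 2" "(a+1) div 3 = p" "(a+1) mod 3 = 2"
        using ab by presburger+
      show ?thesis unfolding T_def h by simp
    qed
    have t3: "T (a+b+1) (a) = ((p+q) choose (p))"
    proof -
      have h: "(a+b+1) div 3 = p+q" "(a+b+1) mod 3 = 2" "(a) div 3 = p" "(a) mod 3 = 1"
        using ab by presburger+
      show ?thesis unfolding T_def h by simp
    qed
    have e1: "(if 3 dvd (a+2) then 0 else 1) = (0::nat)" using ab by presburger
    have e2: "(if 3 dvd b then 0 else 1) = (0::nat)" using ab by presburger
    show ?thesis unfolding t1 t2 t3 e1 e2 using pas by (simp del: binomial_Suc_Suc add: xx add.commute)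
  next
    assume rs: "r = 1" "s = 1"
    have ab: "a = 3*p+1" "b = 3*q+1" using a b rs by auto
    have t1: "T (a+b+2) (a+1) = 0"
    proof -
      have h: "(a+b+2) div 3 = p+q+1" "(a+b+2) mod 3 = 1" "(a+1) div 3 = p" "(a+1) mod 3 = 2"
        using ab by presburger+
      show ?thesis unfolding T_def h by simp
    qed
    have t2: "T (a+b+1) (a+1) = 0"
    proof -
      have h: "(a+b+1) div 3 = p+q+1" "(a+b+1) mod 3 = 0" "(a+1) div 3 = p" "(a+1) mod 3 = 2"
        using ab by presburger+
      show ?thesis unfolding T_def h by simp
    qed
    have t3: "T (a+b+1) (a) = 0"
    proof -
      have h: "(a+b+1) div 3 = p+q+1" "(a+b+1) mod 3 = 0" "(a) div 3 = p" "(a) mod 3 = 1"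
        using ab by presburger+
      show ?thesis unfolding T_def h by simp
    qed
    have e1: "(if 3 dvd (a+2) then 0 else 1) = (0::nat)" using ab by presburger
    have e2: "(if 3 dvd b then 0 else 1) = (1::nat)" using ab by presburger
    show ?thesis unfolding t1 t2 t3 e1 e2 using pas by (simp del: binomial_Suc_Suc add: xx add.commute)
  next
    assume rs: "r = 1" "s = 2"
    have ab: "a = 3*p+1" "b = 3*q+2" using a b rs by auto
    have t1: "T (a+b+2) (a+1) = ((p+q+1) choose (p))"
    proof -
      have h: "(a+b+2) div 3 = p+q+1" "(a+b+2) mod 3 = 2" "(a+1) div 3 = p" "(a+1) mod 3 = 2"
        using ab by presburger+
      show ?thesis unfolding T_def h by simp
    qed
    have t2: "T (a+b+1) (a+1) = 0"
    proof -
      have h: "(a+b+1) div 3 = p+q+1" "(a+b+1) mod 3 = 1" "(a+1) div 3 = p" "(a+1) mod 3 = 2"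
        using ab by presburger+
      show ?thesis unfolding T_def h by simp
    qed
    have t3: "T (a+b+1) (a) = ((p+q+1) choose (p))"
    proof -
      have h: "(a+b+1) div 3 = p+q+1" "(a+b+1) mod 3 = 1" "(a) div 3 = p" "(a) mod 3 = 1"
        using ab by presburger+
      show ?thesis unfolding T_def h by simp
    qed
    have e1: "(if 3 dvd (a+2) then 0 else 1) = (0::nat)" using ab by presburger
    have e2: "(if 3 dvd b then 0 else 1) = (1::nat)" using ab by presburger
    show ?thesis unfolding t1 t2 t3 e1 e2 using pas by (simp del: binomial_Suc_Suc add: xx add.commute)
  next
    assume rs: "r = 2" "s = 0"
    have ab: "a = 3*p+2" "b = 3*q+0" using a b rs by auto
    have t1: "T (a+b+2) (a+1) = ((p+q+1) choose (p+1))"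
    proof -
      have h: "(a+b+2) div 3 = p+q+1" "(a+b+2) mod 3 = 1" "(a+1) div 3 = p+1" "(a+1) mod 3 = 0"
        using ab by presburger+
      show ?thesis unfolding T_def h by simp
    qed
    have t2: "T (a+b+1) (a+1) = ((p+q+1) choose (p+1))"
    proof -
      have h: "(a+b+1) div 3 = p+q+1" "(a+b+1) mod 3 = 0" "(a+1) div 3 = p+1" "(a+1) mod 3 = 0"
        using ab by presburger+
      show ?thesis unfolding T_def h by simp
    qed
    have t3: "T (a+b+1) (a) = 0"
    proof -
      have h: "(a+b+1) div 3 = p+q+1" "(a+b+1) mod 3 = 0" "(a) div 3 = p" "(a) mod 3 = 2"
        using ab by presburger+
      show ?thesis unfolding T_def h by simp
    qed
    have e1: "(if 3 dvd (a+2) then 0 else 1) = (1::nat)" using ab by presburger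
    have e2: "(if 3 dvd b then 0 else 1) = (0::nat)" using ab by presburger
    show ?thesis unfolding t1 t2 t3 e1 e2 using pas by (simp del: binomial_Suc_Suc add: xx add.commute)
  next
    assume rs: "r = 2" "s = 1"
    have ab: "a = 3*p+2" "b = 3*q+1" using a b rs by auto
    have t1: "T (a+b+2) (a+1) = ((p+q+1) choose (p+1))"
    proof -
      have h: "(a+b+2) div 3 = p+q+1" "(a+b+2) mod 3 = 2" "(a+1) div 3 = p+1" "(a+1) mod 3 = 0"
        using ab by presburger+
      show ?thesis unfolding T_def h by simp
    qed
    have t2: "T (a+b+1) (a+1) = ((p+q+1) choose (p+1))"
    proof -
      have h: "(a+b+1) div 3 = p+q+1" "(a+b+1) mod 3 = 1" "(a+1) div 3 = p+1" "(a+1) mod 3 = 0"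
        using ab by presburger+
      show ?thesis unfolding T_def h by simp
    qed
    have t3: "T (a+b+1) (a) = 0"
    proof -
      have h: "(a+b+1) div 3 = p+q+1" "(a+b+1) mod 3 = 1" "(a) div 3 = p" "(a) mod 3 = 2"
        using ab by presburger+
      show ?thesis unfolding T_def h by simp
    qed
    have e1: "(if 3 dvd (a+2) then 0 else 1) = (1::nat)" using ab by presburger
    have e2: "(if 3 dvd b then 0 else 1) = (1::nat)" using ab by presburger
    show ?thesis unfolding t1 t2 t3 e1 e2 using pas by (simp del: binomial_Suc_Suc add: xx add.commute)
  next
    assume rs: "r = 2" "s = 2"
    have ab: "a = 3*p+2" "b = 3*q+2" using a b rs by auto
    have t1: "T (a+b+2) (a+1) = ((p+q+2) choose (p+1))"
    proof -
      have h: "(a+b+2) div 3 = p+q+2" "(a+b+2) mod 3 = 0" "(a+1) div 3 = p+1" "(a+1) mod 3 = 0"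
        using ab by presburger+
      show ?thesis unfolding T_def h by simp
    qed
    have t2: "T (a+b+1) (a+1) = ((p+q+1) choose (p+1))"
    proof -
      have h: "(a+b+1) div 3 = p+q+1" "(a+b+1) mod 3 = 2" "(a+1) div 3 = p+1" "(a+1) mod 3 = 0"
        using ab by presburger+
      show ?thesis unfolding T_def h by simp
    qed
    have t3: "T (a+b+1) (a) = ((p+q+1) choose (p))"
    proof -
      have h: "(a+b+1) div 3 = p+q+1" "(a+b+1) mod 3 = 2" "(a) div 3 = p" "(a) mod 3 = 2"
        using ab by presburger+
      show ?thesis unfolding T_def h by simp
    qed
    have e1: "(if 3 dvd (a+2) then 0 else 1) = (1::nat)" using ab by presburger
    have e2: "(if 3 dvd b then 0 else 1) = (1::nat)" using ab by presburger
    show ?thesis unfolding t1 t2 t3 e1 e2 using pas by (simp del: binomial_Suc_Suc add: xx add.commute)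
  qed
qed

lemma mod2_lin: "((x::nat)*y + z*w) mod 2 = ((x mod 2)*(y mod 2) + (z mod 2)*(w mod 2)) mod 2"
proof -
  have "((x mod 2)*(y mod 2) + (z mod 2)*(w mod 2)) mod 2 = (((x mod 2)*(y mod 2)) mod 2 + ((z mod 2)*(w mod 2)) mod 2) mod 2"
    by (rule mod_add_eq[symmetric])
  also have "\<dots> = ((x*y) mod 2 + (z*w) mod 2) mod 2" by (simp only: mod_mult_eq)
  also have "\<dots> = (x*y+z*w) mod 2" by (rule mod_add_eq)
  finally show ?thesis by (rule sym)
qed

lemma ifm: "(if c then 0 else 1::nat) mod 2 = (if c then 0 else 1)" by simp

lemma Tn0: "T n 0 = 1" unfolding T_def by simp
lemma Tnn: "T n n = 1" unfolding T_def by simp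

lemma H_mod: "H a b mod 2 = T (a+b) a mod 2"
proof (induction a b rule: H.induct)
  case (1 b) then show ?case using Tn0[of b] by simp
next
  case (2 a) then show ?case using Tnn[of "Suc a"] by simp
next
  case (3 a b)
  have i1: "H (Suc a) b mod 2 = T (a+b+1) (a+1) mod 2" using "3.IH"(1) by simp
  have i2: "H a (Suc b) mod 2 = T (a+b+1) a mod 2" using "3.IH"(2) by simp
  have "H (Suc a) (Suc b) mod 2 = (fib (a+2) * H (Suc a) b + fib b * H a (Suc b)) mod 2"
    by (simp only: H.simps)
  also have "\<dots> = ((fib (a+2) mod 2) * (H (Suc a) b mod 2) + (fib b mod 2) * (H a (Suc b) mod 2)) mod 2"
    by (rule mod2_lin)
  also have "\<dots> = (((if 3 dvd (a+2) then 0 else 1)) * (T (a+b+1) (a+1) mod 2) + ((if 3 dvd b then 0 else 1)) * (T (a+b+1) a mod 2)) mod 2"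
    by (simp only: i1 i2 fib_mod2)
  also have "\<dots> = ((if 3 dvd (a+2) then 0 else 1) * T (a+b+1) (a+1) + (if 3 dvd b then 0 else 1) * T (a+b+1) a) mod 2"
    using mod2_lin[of "if 3 dvd (a+2) then 0 else 1" "T (a+b+1) (a+1)" "if 3 dvd b then 0 else 1" "T (a+b+1) a"]
    by (simp only: ifm)
  also have "\<dots> = T (a+b+2) (a+1) mod 2" by (rule T_rec[symmetric])
  also have "T (a+b+2) (a+1) = T (Suc a + Suc b) (Suc a)" by simp
  finally show ?case .
qed

lemma T_gt: "n < k \<Longrightarrow> T n k = 0"
proof -
  assume "n < k"
  have "n div 3 \<le> k div 3" using \<open>n < k\<close> by (simp add: div_le_mono)
  then consider "n div 3 < k div 3" | "n div 3 = k div 3" by linarith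
  then show ?thesis
  proof cases
    case 1 then show ?thesis by (simp add: T_def)
  next
    case 2 then have "n mod 3 < k mod 3" using \<open>n < k\<close> by presburger
    then show ?thesis by (simp add: T_def)
  qed
qed

lemma fibonomial_T: "fibonomial n k mod 2 = T n k mod 2"
proof (cases "k \<le> n")
  case True
  then show ?thesis using fibonomial_H[OF True] H_mod[of k "n-k"] by simp
next
  case False
  then show ?thesis by (simp add: fibonomial_def T_gt)
qed

lemma binom_mod2_step: "(n choose k) mod 2 = ((n div 2 choose k div 2) * (n mod 2 choose k mod 2)) mod 2"
proof (induction n arbitrary: k rule: less_induct)
  case (less n)
  consider "n = 0" | "n = 1" | m where "n = m + 2" by atomize_elim presburger
  then show ?case
  proof cases
    case 1
    show ?thesis
    proof (cases "k \<ge> 2")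
      case True
      then have "k div 2 > 0" by simp
      then have z: "(0 choose (k div 2)) = 0" by (simp add: binomial_eq_0)
      have z2: "(0 choose k) = 0" using True by (simp add: binomial_eq_0)
      show ?thesis by (simp only: 1 z z2 div_0 mult_0 mod_0)
    next
      case False
      then show ?thesis using 1 by (cases "k = 0"; cases "k = 1"; simp)
    qed
  next
    case 2
    show ?thesis
    proof (cases "k \<ge> 2")
      case True
      then have "k div 2 > 0" by simp
      then have z: "(0 choose (k div 2)) = 0" by (simp add: binomial_eq_0)
      have z2: "(1 choose k) = 0" using True by (simp add: binomial_eq_0)
      have z3: "(1::nat) div 2 = 0" by simp
      show ?thesis by (simp only: 2 z z2 z3 mult_0 mod_0)
    next
      case False
      then show ?thesis using 2 by (cases "k = 0"; cases "k = 1"; simp)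
    qed
  next
    case 3
    consider "k = 0" | "k = 1" | j where "k = j + 2" by atomize_elim presburger
    then show ?thesis
    proof cases
      case 1 then show ?thesis by simp
    next
      case 2 then show ?thesis using 3 by (simp add: odd_iff_mod_2_eq_one)
    next
      case j: 3
      have e: "(m+2 choose (j+2)) = (m choose j) + 2 * (m choose (j+1)) + (m choose (j+2))"
        using binomial_Suc_Suc[of "Suc m" "Suc j"] binomial_Suc_Suc[of m j] binomial_Suc_Suc[of m "Suc j"]
        by simp
      have ih1: "(m choose j) mod 2 = ((m div 2 choose j div 2) * (m mod 2 choose j mod 2)) mod 2"
        using less 3 by simp
      have ih2: "(m choose (j+2)) mod 2 = ((m div 2 choose (j div 2 + 1)) * (m mod 2 choose j mod 2)) mod 2"
        using less[of m "j+2"] 3 by simp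
      have p: "(m div 2 + 1 choose (j div 2 + 1)) = (m div 2 choose j div 2) + (m div 2 choose (j div 2 + 1))"
        by simp
      have "(n choose k) mod 2 = ((m choose j) mod 2 + (m choose (j+2)) mod 2) mod 2"
        unfolding 3 j e by presburger
      also have "\<dots> = ((m div 2 + 1 choose (j div 2 + 1)) * (m mod 2 choose j mod 2)) mod 2"
        unfolding ih1 ih2 p by (simp add: mod_add_eq distrib_right)
      also have "\<dots> = ((n div 2 choose k div 2) * (n mod 2 choose k mod 2)) mod 2"
        unfolding 3 j by simp
      finally show ?thesis .
    qed
  qed
qed

lemma lucas2: "m < 2^N \<Longrightarrow> j < 2^N \<Longrightarrow>
  (m choose j) mod 2 = (\<Prod>i<N. (m div 2^i mod 2) choose (j div 2^i mod 2)) mod 2"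
proof (induction N arbitrary: m j)
  case 0 then show ?case by simp
next
  case (Suc N)
  have ih: "(m div 2 choose j div 2) mod 2 = (\<Prod>i<N. (m div 2 div 2^i mod 2) choose (j div 2 div 2^i mod 2)) mod 2"
    using Suc by (intro Suc.IH) auto
  have "(\<Prod>i<Suc N. (m div 2^i mod 2) choose (j div 2^i mod 2))
      = (m mod 2 choose j mod 2) * (\<Prod>i<N. (m div 2 div 2^i mod 2) choose (j div 2 div 2^i mod 2))"
    by (subst prod.lessThan_Suc_shift) (simp add: div_mult2_eq)
  note pe = this
  have "(m choose j) mod 2 = ((m div 2 choose j div 2) * (m mod 2 choose j mod 2)) mod 2"
    by (rule binom_mod2_step)
  also have "\<dots> = (((m div 2 choose j div 2) mod 2) * (m mod 2 choose j mod 2)) mod 2"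
    by (rule mod_mult_left_eq[symmetric])
  also have "\<dots> = (((\<Prod>i<N. (m div 2 div 2^i mod 2) choose (j div 2 div 2^i mod 2)) mod 2) * (m mod 2 choose j mod 2)) mod 2"
    by (simp only: ih)
  also have "\<dots> = ((\<Prod>i<N. (m div 2 div 2^i mod 2) choose (j div 2 div 2^i mod 2)) * (m mod 2 choose j mod 2)) mod 2"
    by (rule mod_mult_left_eq)
  also have "\<dots> = (\<Prod>i<Suc N. (m div 2^i mod 2) choose (j div 2^i mod 2)) mod 2"
    by (simp only: pe mult.commute)
  finally show ?case .
qed

definition dig :: "nat \<Rightarrow> nat \<Rightarrow> nat" where
  "dig n i = (if i = 0 then n mod 3 else n div 3 div 2^(i-1) mod 2)"

lemma binsum: "(m::nat) mod 2^N = (\<Sum>i<N. (m div 2^i mod 2) * 2^i)"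
proof (induction N)
  case 0 then show ?case by simp
next
  case (Suc N)
  have p: "(2::nat)^(Suc N) = 2^N * 2" by simp
  have "m mod 2^(Suc N) = 2^N * (m div 2^N mod 2) + m mod 2^N"
    unfolding p by (rule mod_mult2_eq)
  then show ?case using Suc by (simp add: mult.commute)
qed

lemma bits: "(\<forall>i. (e::nat\<Rightarrow>nat) i < 2) \<Longrightarrow> (\<Sum>i<N. e i * 2^i) div 2^j mod 2 = (if j < N then e j else 0)"
proof (induction N arbitrary: e j)
  case 0 then show ?case by simp
next
  case (Suc N)
  define S where "S = (\<Sum>i<N. e (Suc i) * 2^i)"
  have eq: "(\<Sum>i<Suc N. e i * 2^i) = e 0 + 2 * S"
    unfolding S_def by (subst sum.lessThan_Suc_shift) (simp add: sum_distrib_left mult_ac)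
  have e0: "e 0 < 2" using Suc.prems by simp
  show ?case
  proof (cases j)
    case 0 then show ?thesis unfolding eq using e0 by simp
  next
    case (Suc j')
    have "(e 0 + 2 * S) div 2^j = (e 0 + 2 * S) div 2 div 2^j'"
      using Suc by (simp add: div_mult2_eq)
    also have "(e 0 + 2 * S) div 2 = S" using e0 by simp
    finally have "(e 0 + 2 * S) div 2^j = S div 2^j'" .
    moreover have "S div 2^j' mod 2 = (if j' < N then e (Suc j') else 0)"
      unfolding S_def using Suc.IH[of "\<lambda>i. e (Suc i)" j'] Suc.prems by simp
    ultimately show ?thesis unfolding eq using Suc by simp
  qed
qed

lemma sumF: "finite {i. d i \<noteq> 0} \<Longrightarrow> {i. d i \<noteq> 0} \<subseteq> {..<Suc N} \<Longrightarrow>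
  (\<Sum>i\<in>{i. d i \<noteq> 0}. d i * baseF i) = d 0 + 3 * (\<Sum>i<N. d (Suc i) * 2^i)"
proof -
  assume f: "finite {i. d i \<noteq> 0}" and sub: "{i. d i \<noteq> 0} \<subseteq> {..<Suc N}"
  have "(\<Sum>i\<in>{i. d i \<noteq> 0}. d i * baseF i) = (\<Sum>i<Suc N. d i * baseF i)"
    by (rule sum.mono_neutral_left) (use sub in auto)
  also have "\<dots> = d 0 + (\<Sum>i<N. d (Suc i) * (3 * 2^i))"
    by (subst sum.lessThan_Suc_shift) (simp add: baseF_def)
  also have "\<dots> = d 0 + 3 * (\<Sum>i<N. d (Suc i) * 2^i)"
    by (simp add: sum_distrib_left mult_ac)
  finally show ?thesis .
qed

lemma dig_supp: "{i. dig n i \<noteq> 0} \<subseteq> {..<Suc n}"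
proof
  fix i assume "i \<in> {i. dig n i \<noteq> 0}"
  then have nz: "dig n i \<noteq> 0" by simp
  show "i \<in> {..<Suc n}"
  proof (cases i)
    case 0 then show ?thesis by simp
  next
    case (Suc i')
    then have "n div 3 div 2^i' \<noteq> 0" using nz by (auto simp: dig_def)
    then have "2^i' \<le> n div 3" by (simp add: div_greater_zero_iff)
    moreover have "i' < 2^i'" by (rule less_exp)
    ultimately have "i' < n" by linarith
    then show ?thesis using Suc by simp
  qed
qed

lemma dig_exp: "is_F_expansion n (dig n)"
proof -
  have fin: "finite {i. dig n i \<noteq> 0}" using dig_supp finite_subset by blast
  have bnd: "\<forall>i. dig n i * baseF i < baseF (Suc i)"
  proof
    fix i show "dig n i * baseF i < baseF (Suc i)"
    proof (cases i)
      case 0 then show ?thesis by (simp add: dig_def baseF_def)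
    next
      case (Suc i')
      have "dig n i \<le> 1" using Suc by (simp add: dig_def)
      then have "dig n i * (3 * 2^i') \<le> 3 * 2^i'" by simp
      also have "\<dots> < 3 * 2^(Suc i')" by simp
      finally show ?thesis using Suc by (simp add: baseF_def)
    qed
  qed
  have m: "n div 3 < 2^n"
    using less_exp[of n] by linarith
  have "(\<Sum>i\<in>{i. dig n i \<noteq> 0}. dig n i * baseF i) = dig n 0 + 3 * (\<Sum>i<n. dig n (Suc i) * 2^i)"
    by (rule sumF[OF fin dig_supp])
  also have "(\<Sum>i<n. dig n (Suc i) * 2^i) = n div 3 mod 2^n"
    by (simp add: binsum dig_def)
  also have "\<dots> = n div 3" using m by simp
  finally have "(\<Sum>i\<in>{i. dig n i \<noteq> 0}. dig n i * baseF i) = n" by (simp add: dig_def)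
  then show ?thesis unfolding is_F_expansion_def using fin bnd by simp
qed

lemma dig_unique: "is_F_expansion n d \<Longrightarrow> d = dig n"
proof -
  assume "is_F_expansion n d"
  then have fin: "finite {i. d i \<noteq> 0}" and bnd: "\<forall>i. d i * baseF i < baseF (Suc i)"
    and sm: "n = (\<Sum>i\<in>{i. d i \<noteq> 0}. d i * baseF i)"
    unfolding is_F_expansion_def by auto
  obtain N where N: "\<forall>i\<in>{i. d i \<noteq> 0}. i < N" using fin finite_nat_set_iff_bounded by blast
  have sub: "{i. d i \<noteq> 0} \<subseteq> {..<Suc N}" using N less_SucI by blast
  define S where "S = (\<Sum>i<N. d (Suc i) * 2^i)"
  have n: "n = d 0 + 3 * S" using sm sumF[OF fin sub] S_def by simp
  have d0: "d 0 < 3" using bnd[rule_format, of 0] by (simp add: baseF_def)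
  have ds: "\<forall>i. d (Suc i) < 2"
  proof
    fix i
    have "d (Suc i) * (3 * 2^i) < 3 * 2^(Suc i)" using bnd[rule_format, of "Suc i"] by (simp add: baseF_def)
    then show "d (Suc i) < 2" by simp
  qed
  have m3: "n mod 3 = d 0" using n d0 by simp
  have dv3: "n div 3 = S" using n d0 by simp
  show "d = dig n"
  proof
    fix i show "d i = dig n i"
    proof (cases i)
      case 0 then show ?thesis by (simp add: dig_def m3)
    next
      case (Suc j)
      have "dig n i = S div 2^j mod 2" using Suc by (simp add: dig_def dv3)
      also have "\<dots> = (if j < N then d (Suc j) else 0)"
        unfolding S_def by (rule bits) (use ds in simp)
      also have "\<dots> = d i" using Suc N by auto
      finally show ?thesis by simp
    qed
  qed
qed

lemma F_digits_dig: "F_digits n = dig n"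
  unfolding F_digits_def
  by (rule the_equality) (auto intro: dig_exp dig_unique)

lemma fibfact_small: "x \<le> 2 \<Longrightarrow> fibfact x = 1"
  by (cases x; cases "x - 1") (auto simp: fibfact_def numeral_2_eq_2 le_Suc_eq)

lemma fibonomial_small: "a \<le> 2 \<Longrightarrow> fibonomial a b = (if b \<le> a then 1 else 0)"
  by (simp add: fibonomial_def fibfact_small)

lemma fibonomial_bit: "a \<le> 1 \<Longrightarrow> fibonomial a b = a choose b"
proof -
  assume a: "a \<le> 1"
  then have "fibonomial a b = (if b \<le> a then 1 else 0)" by (simp add: fibonomial_small)
  moreover have "(a choose b) = (if b \<le> a then 1 else 0)"
    using a by (cases "a = 0"; cases "b = 0"; cases "b = 1"; auto simp: binomial_eq_0)
  ultimately show ?thesis by simp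
qed

theorem mainTheorem4:
  fixes n k :: nat
  shows "fibonomial n k mod 2 =
         (\<Prod>i\<in>{i. F_digits n i \<noteq> 0 \<or> F_digits k i \<noteq> 0}.
            fibonomial (F_digits n i) (F_digits k i)) mod 2"
proof -
  define N where "N = n + k"
  define g where "g i = fibonomial (dig n i) (dig k i)" for i
  have sub: "{i. dig n i \<noteq> 0 \<or> dig k i \<noteq> 0} \<subseteq> {..<Suc N}"
    using dig_supp[of n] dig_supp[of k] unfolding N_def by auto
  have "(\<Prod>i\<in>{i. dig n i \<noteq> 0 \<or> dig k i \<noteq> 0}. g i) = (\<Prod>i<Suc N. g i)"
    by (rule prod.mono_neutral_left) (use sub in \<open>auto simp: g_def fibonomial_def fibfact_def\<close>)
  also have "\<dots> = g 0 * (\<Prod>i<N. g (Suc i))"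
    by (rule prod.lessThan_Suc_shift)
  also have "g 0 = (if k mod 3 \<le> n mod 3 then 1 else 0)"
    unfolding g_def dig_def by (simp add: fibonomial_small)
  also have "(\<Prod>i<N. g (Suc i)) = (\<Prod>i<N. (n div 3 div 2^i mod 2) choose (k div 3 div 2^i mod 2))"
    unfolding g_def dig_def by (intro prod.cong refl) (simp add: fibonomial_bit)
  finally have P: "(\<Prod>i\<in>{i. dig n i \<noteq> 0 \<or> dig k i \<noteq> 0}. g i)
     = (if k mod 3 \<le> n mod 3 then 1 else 0) * (\<Prod>i<N. (n div 3 div 2^i mod 2) choose (k div 3 div 2^i mod 2))" .
  have "n div 3 < 2^N" using less_exp[of n] power_increasing[of n N "2::nat"] unfolding N_def by linarith
  moreover have "k div 3 < 2^N" using less_exp[of k] power_increasing[of k N "2::nat"] unfolding N_def by linarith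
  ultimately have L: "(n div 3 choose k div 3) mod 2 = (\<Prod>i<N. (n div 3 div 2^i mod 2) choose (k div 3 div 2^i mod 2)) mod 2"
    by (rule lucas2)
  have "fibonomial n k mod 2 = T n k mod 2" by (rule fibonomial_T)
  also have "\<dots> = (\<Prod>i\<in>{i. dig n i \<noteq> 0 \<or> dig k i \<noteq> 0}. g i) mod 2"
    unfolding P T_def using L by simp
  finally show ?thesis unfolding F_digits_dig g_def .
qed

end
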